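(* Let $A\in\mathbb{R}^{n^2\times n^2}$ be PS-symmetric and define $\tilde A\in\mathbb{R}^{n^2\times n^2}$ by $\tilde A(i_2+(j_2-1)n,\,i_1+(j_1-1)n)=A(i_1+(i_2-1)n,\,j_1+(j_2-1)n)$ for $1\le i_1,i_2,j_1,j_2\le n$. Then $\tilde A$ is PS-symmetric. Consequently there exist real scalars $\lambda^{(\mathrm{sym})}_1,\dots,\lambda^{(\mathrm{sym})}_{n(n+1)/2}$, $\lambda^{(\mathrm{skew})}_1,\dots,\lambda^{(\mathrm{skew})}_{n(n-1)/2}$, symmetric matrices $B^{(\mathrm{sym})}_i\in\mathbb{R}^{n\times n}$ and skew-symmetric matrices $B^{(\mathrm{skew})}_i\in\mathbb{R}^{n\times n}$, whose vecs together form an orthonormal basis of $\mathbb{R}^{n^2}$, such that $$A=\sum_{i=1}^{n(n+1)/2}\lambda^{(\mathrm{sym})}_i\,B^{(\mathrm{sym})}_i\otimes B^{(\mathrm{sym})}_i+\sum_{i=1}^{n(n-1)/2}\lambda^{(\mathrm{skew})}_i\,B^{(\mathrm{skew})}_i\otimes B^{(\mathrm{skew})}_i.$$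
   Context: $\Pi_{nn}=I_{n^2}(:,p)$ with $p=[1{:}n{:}n^2,\;2{:}n{:}n^2,\;\dots,\;n{:}n{:}n^2]$ (MATLAB colon notation), equivalently $\Pi_{nn}(e_i\otimes e_j)=e_j\otimes e_i$ for the standard basis $e_1,\dots,e_n$ of $\mathbb{R}^n$. A matrix $M\in\mathbb{R}^{n^2\times n^2}$ is PS-symmetric if $M=M^T$ and $M=\Pi_{nn}M\Pi_{nn}$. $\otimes$ is the Kronecker product and $\mathrm{vec}$ stacks columns. *)

theory Defs
  imports "Jordan_Normal_Form.Matrix"
begin

text \<open>All indices are 0-based.  An index of R^(n^2) is written as a + b*n with a,b < n.\<close>

text \<open>The perfect-shuffle permutation Pi_nn: Pi (e_i tensor e_j) = e_j tensor e_i,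
  where e_i tensor e_j is the standard basis vector with index i*n + j.\<close>
definition PS_perm :: "nat \<Rightarrow> real mat" where
  "PS_perm n = mat (n^2) (n^2) (\<lambda>(r, c). if r = (c mod n) * n + c div n then 1 else 0)"

definition PS_symmetric :: "nat \<Rightarrow> real mat \<Rightarrow> bool" where
  "PS_symmetric n M \<longleftrightarrow> M \<in> carrier_mat (n^2) (n^2) \<and> M = M\<^sup>T \<and> M = PS_perm n * M * PS_perm n"

definition kron :: "real mat \<Rightarrow> real mat \<Rightarrow> real mat" where
  "kron B C = mat (dim_row B * dim_row C) (dim_col B * dim_col C)
     (\<lambda>(i, j). B $$ (i div dim_row C, j div dim_col C) * C $$ (i mod dim_row C, j mod dim_col C))"

definition vec_of_mat :: "real mat \<Rightarrow> real vec" where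
  "vec_of_mat B = vec (dim_row B * dim_col B) (\<lambda>k. B $$ (k mod dim_row B, k div dim_row B))"

definition tilde :: "nat \<Rightarrow> real mat \<Rightarrow> real mat" where
  "tilde n A = mat (n^2) (n^2)
     (\<lambda>(r, c). A $$ (c mod n + (r mod n) * n, c div n + (r div n) * n))"

definition orthonormal_basis_family :: "nat \<Rightarrow> (nat \<Rightarrow> real vec) \<Rightarrow> bool" where
  "orthonormal_basis_family N V \<longleftrightarrow>
     (\<forall>k<N. V k \<in> carrier_vec N) \<and>
     (\<forall>k<N. \<forall>l<N. V k \<bullet> V l = (if k = l then 1 else 0)) \<and>
     (\<forall>v \<in> carrier_vec N. \<exists>c :: nat \<Rightarrow> real. \<forall>r<N. v $ r = (\<Sum>k<N. c k * V k $ r))"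

end

theory Submission
  imports Defs "HOL-Analysis.Function_Topology"
begin


lemma max_on_zero_set:
  fixes g f :: "(nat \<Rightarrow> real) \<Rightarrow> real" and N :: nat
  defines "X \<equiv> product_topology (\<lambda>_. euclideanreal) {..<N}"
  assumes g: "continuous_map X euclideanreal g"
    and f: "continuous_map X euclideanreal f"
    and ne: "x0 \<in> PiE {..<N} (\<lambda>_. {-1..1})" "g x0 = 0"
  shows "\<exists>x\<in>PiE {..<N} (\<lambda>_. {-1..1}). g x = 0 \<and>
     (\<forall>y\<in>PiE {..<N} (\<lambda>_. {-1..1}). g y = 0 \<longrightarrow> f y \<le> f x)"
proof -
  let ?B = "PiE {..<N} (\<lambda>_. {-1..1::real})"
  let ?Z = "{x \<in> topspace X. g x \<in> {0}}"
  have cB: "compactin X ?B" unfolding X_def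
    by (simp add: compactin_PiE)
  have cZ: "closedin X ?Z"
    by (rule closedin_continuous_map_preimage[OF g]) simp
  have K: "compactin X (?Z \<inter> ?B)" by (rule closed_Int_compactin[OF cZ cB])
  have "compactin euclideanreal (f ` (?Z \<inter> ?B))"
    by (rule image_compactin[OF K f])
  hence cK: "compact (f ` (?Z \<inter> ?B))" by simp
  have sub: "?B \<subseteq> topspace X" unfolding X_def by (auto simp: PiE_def Pi_def)
  have "x0 \<in> ?Z \<inter> ?B" using ne sub by auto
  hence "f ` (?Z \<inter> ?B) \<noteq> {}" by blast
  from compact_attains_sup[OF cK this] obtain s where s: "s \<in> f ` (?Z \<inter> ?B)"
    "\<forall>t\<in>f ` (?Z \<inter> ?B). t \<le> s" by blast
  then obtain x where x: "x \<in> ?Z \<inter> ?B" "s = f x" by blast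
  show ?thesis using x s sub by (intro bexI[of _ x]) auto
qed



definition ip :: "nat \<Rightarrow> (nat \<Rightarrow> real) \<Rightarrow> (nat \<Rightarrow> real) \<Rightarrow> real" where
  "ip N x y = (\<Sum>i<N. x i * y i)"

definition app :: "nat \<Rightarrow> (nat \<Rightarrow> nat \<Rightarrow> real) \<Rightarrow> (nat \<Rightarrow> real) \<Rightarrow> (nat \<Rightarrow> real)" where
  "app N T x = (\<lambda>i. \<Sum>j<N. T i j * x j)"

lemma ip_comm: "ip N x y = ip N y x"
  unfolding ip_def by (simp add: mult.commute)

lemma ip_add_left: "ip N (\<lambda>i. a i + b i) c = ip N a c + ip N b c"
  unfolding ip_def by (simp add: distrib_right sum.distrib)

lemma ip_diff_left: "ip N (\<lambda>i. a i - b i) c = ip N a c - ip N b c"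
  unfolding ip_def by (simp add: left_diff_distrib sum_subtractf)

lemma ip_scale_left: "ip N (\<lambda>i. t * a i) c = t * ip N a c"
  unfolding ip_def by (simp add: sum_distrib_left mult.assoc)

lemma ip_add_right: "ip N c (\<lambda>i. a i + b i) = ip N c a + ip N c b"
  unfolding ip_def by (simp add: distrib_left sum.distrib)

lemma ip_diff_right: "ip N c (\<lambda>i. a i - b i) = ip N c a - ip N c b"
  unfolding ip_def by (simp add: right_diff_distrib sum_subtractf)

lemma ip_scale_right: "ip N c (\<lambda>i. t * a i) = t * ip N c a"
  unfolding ip_def by (simp add: sum_distrib_left mult.left_commute)

lemma ip_cong: "(\<And>i. i < N \<Longrightarrow> x i = x' i) \<Longrightarrow> (\<And>i. i < N \<Longrightarrow> y i = y' i) \<Longrightarrow> ip N x y = ip N x' y'"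
  unfolding ip_def by (rule sum.cong) auto

lemma ip_self_nonneg: "ip N x x \<ge> 0"
  unfolding ip_def by (intro sum_nonneg) auto

lemma ip_self_zero: "ip N x x = 0 \<Longrightarrow> i < N \<Longrightarrow> x i = 0"
  unfolding ip_def by (subst (asm) sum_nonneg_eq_0_iff) auto

lemma ip_sumc_left: "ip N (\<lambda>j. \<Sum>k<m. c k * v k j) w = (\<Sum>k<m. c k * ip N (v k) w)"
  unfolding ip_def by (simp add: sum_distrib_right sum_distrib_left mult.assoc, rule sum.swap)

lemma ip_sumc_right: "ip N w (\<lambda>j. \<Sum>k<m. c k * v k j) = (\<Sum>k<m. c k * ip N w (v k))"
  using ip_sumc_left[of N c v m w] by (simp add: ip_comm[of N w])

lemma app_lin: "app N T (\<lambda>i. a i + t * b i) = (\<lambda>i. app N T a i + t * app N T b i)"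
  unfolding app_def by (auto simp: distrib_left sum.distrib sum_distrib_left mult.left_commute)

lemma app_cong: "(\<And>i. i < N \<Longrightarrow> x i = x' i) \<Longrightarrow> app N T x = app N T x'"
  unfolding app_def by (rule ext, rule sum.cong) auto

lemma app_sumc: "app N T (\<lambda>j. \<Sum>k<m. c k * v k j) i = (\<Sum>k<m. c k * app N T (v k) i)"
  unfolding app_def by (simp add: sum_distrib_left mult.left_commute, rule sum.swap)

lemma delta_sum: "i<(N::nat) \<Longrightarrow> (\<Sum>j<N. (if j = i then 1 else 0) * f j) = (f i :: real)"
proof -
  assume "i < N"
  have "(\<Sum>j<N. (if j = i then 1 else 0) * f j) = (\<Sum>j<N. (if j = i then f j else 0))"
    by (rule sum.cong) auto
  also have "\<dots> = f i" using \<open>i<N\<close> by (subst sum.delta) auto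
  finally show ?thesis .
qed

lemma quad_le0: fixes b c :: real assumes "\<And>t. 2 * t * b + t\<^sup>2 * c \<le> 0" shows "b = 0"
proof (rule ccontr)
  assume b: "b \<noteq> 0"
  define D where "D = c\<^sup>2 + 1"
  define t where "t = b / D"
  have d: "D > 0" unfolding D_def by (simp add: add_nonneg_pos)
  have bt: "b = t * D" unfolding t_def using d by simp
  have t0: "t \<noteq> 0" using b bt by auto
  have "2 * t * b + t\<^sup>2 * c = t\<^sup>2 * (2 * D + c)"
    unfolding bt by (simp add: power2_eq_square algebra_simps)
  moreover have "t\<^sup>2 > 0" using t0 by simp
  moreover have "2 * D + c > 0"
  proof -
    have "2 * D + c = 2*(c+1/4)^2 + 15/8" unfolding D_def by (simp add: power2_eq_square algebra_simps)
    moreover have "(c+1/4)^2 \<ge> 0" by simp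
    ultimately show ?thesis by linarith
  qed
  ultimately have "2 * t * b + t\<^sup>2 * c > 0" by simp
  with assms[of t] show False by simp
qed

lemma bessel_count:
  assumes on: "\<And>k l. k < m \<Longrightarrow> l < m \<Longrightarrow> ip N (v k) (v l) = (if k = l then 1 else 0)"
  shows "m \<le> N"
proof -
  have coord: "(\<Sum>k<m. (v k i)\<^sup>2) \<le> 1" if i: "i < N" for i
  proof -
    define e where "e = (\<lambda>j. if j = i then 1 else 0 :: real)"
    define c where "c = (\<lambda>k. v k i)"
    define s where "s = (\<lambda>j. \<Sum>k<m. c k * v k j)"
    have ee: "ip N e e = 1" unfolding ip_def e_def using delta_sum[OF i, of e] i by (simp add: e_def)
    have ev: "ip N e (v k) = c k" for k unfolding ip_def e_def c_def using delta_sum[OF i, of "v k"] by simp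
    have sv: "ip N s (v l) = c l" if "l < m" for l
    proof -
      have "ip N s (v l) = (\<Sum>k<m. c k * (if k = l then 1 else 0))"
        unfolding s_def ip_sumc_left by (rule sum.cong) (auto simp: on that)
      also have "\<dots> = c l" using that delta_sum[of l m c] by (simp add: mult.commute)
      finally show ?thesis .
    qed
    have es: "ip N e s = (\<Sum>k<m. (c k)\<^sup>2)"
      unfolding s_def ip_sumc_right ev by (simp add: power2_eq_square)
    have ss: "ip N s s = (\<Sum>k<m. (c k)\<^sup>2)"
      apply (subst (2) s_def) unfolding ip_sumc_right
      by (rule sum.cong) (auto simp: sv power2_eq_square ip_comm)
    have "0 \<le> ip N (\<lambda>j. e j - s j) (\<lambda>j. e j - s j)" by (rule ip_self_nonneg)
    also have "\<dots> = ip N e e - 2 * ip N e s + ip N s s"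
      unfolding ip_diff_left ip_diff_right by (simp add: ip_comm[of N s e])
    finally show ?thesis unfolding ee es ss c_def by simp
  qed
  have "real m = (\<Sum>k<m. ip N (v k) (v k))" by (simp add: on)
  also have "\<dots> = (\<Sum>i<N. \<Sum>k<m. (v k i)\<^sup>2)"
    unfolding ip_def by (subst sum.swap) (simp add: power2_eq_square)
  also have "\<dots> \<le> (\<Sum>i<N. 1)" by (rule sum_mono) (simp add: coord)
  finally show ?thesis by simp
qed


lemma app_scale: "app N T (\<lambda>i. t * a i) = (\<lambda>i. t * app N T a i)"
  unfolding app_def by (auto simp: sum_distrib_left mult.left_commute)

locale psym =
  fixes N :: nat and T :: "nat \<Rightarrow> nat \<Rightarrow> real" and \<sigma> :: "nat \<Rightarrow> nat"
  assumes Tsym: "\<And>i j. i<N \<Longrightarrow> j<N \<Longrightarrow> T i j = T j i"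
  and sig_lt: "\<And>i. i<N \<Longrightarrow> \<sigma> i < N" and sig_inv: "\<And>i. i<N \<Longrightarrow> \<sigma> (\<sigma> i) = i"
  and Tsig: "\<And>i j. i<N \<Longrightarrow> j<N \<Longrightarrow> T (\<sigma> i) (\<sigma> j) = T i j"
begin

definition E :: "real \<Rightarrow> (nat \<Rightarrow> real) \<Rightarrow> bool" where
  "E \<epsilon> x \<longleftrightarrow> (\<forall>i<N. x (\<sigma> i) = \<epsilon> * x i)"

lemma sig_bij: "bij_betw \<sigma> {..<N} {..<N}"
  by (rule bij_betw_byWitness[where f'=\<sigma>]) (auto simp: sig_inv sig_lt)

lemma sum_sig: "(\<Sum>i<N. f (\<sigma> i)) = (\<Sum>i<N. f i)"
  using sum.reindex_bij_betw[OF sig_bij, of f] by simp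

lemma ip_app: "ip N (app N T x) y = ip N x (app N T y)"
proof -
  have "ip N (app N T x) y = (\<Sum>i<N. \<Sum>j<N. T i j * x j * y i)"
    unfolding ip_def app_def by (simp add: sum_distrib_right)
  also have "\<dots> = (\<Sum>j<N. \<Sum>i<N. T i j * x j * y i)" by (rule sum.swap)
  also have "\<dots> = (\<Sum>j<N. \<Sum>i<N. x j * (T j i * y i))"
    by (intro sum.cong refl) (simp add: Tsym mult_ac)
  also have "\<dots> = ip N x (app N T y)"
    unfolding ip_def app_def by (simp add: sum_distrib_left)
  finally show ?thesis .
qed

lemma app_E: assumes "E \<epsilon> x" shows "E \<epsilon> (app N T x)"
  unfolding E_def
proof (intro allI impI)
  fix i assume i: "i < N"
  have "app N T x (\<sigma> i) = (\<Sum>j<N. T (\<sigma> i) (\<sigma> j) * x (\<sigma> j))"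
    unfolding app_def using sum_sig[of "\<lambda>j. T (\<sigma> i) j * x j"] by simp
  also have "\<dots> = (\<Sum>j<N. \<epsilon> * (T i j * x j))"
    by (intro sum.cong refl) (use assms i in \<open>auto simp: E_def Tsig mult_ac\<close>)
  also have "\<dots> = \<epsilon> * app N T x i" unfolding app_def by (simp add: sum_distrib_left)
  finally show "app N T x (\<sigma> i) = \<epsilon> * app N T x i" .
qed

lemma ip_sig: "ip N (\<lambda>i. x (\<sigma> i)) y = ip N x (\<lambda>i. y (\<sigma> i))"
proof -
  have "ip N (\<lambda>i. x (\<sigma> i)) y = (\<Sum>i<N. x (\<sigma> i) * y (\<sigma> (\<sigma> i)))"
    unfolding ip_def by (intro sum.cong refl) (simp add: sig_inv)
  also have "\<dots> = ip N x (\<lambda>i. y (\<sigma> i))"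
    unfolding ip_def using sum_sig[of "\<lambda>i. x i * y (\<sigma> i)"] by simp
  finally show ?thesis .
qed

lemma E_orth: assumes "E 1 x" "E (-1) y" shows "ip N x y = 0"
proof -
  have "ip N x y = ip N (\<lambda>i. x (\<sigma> i)) (\<lambda>i. y (\<sigma> i))"
    using ip_sig[of x "\<lambda>i. y (\<sigma> i)"] by (simp add: ip_def sig_inv)
  also have "\<dots> = ip N (\<lambda>i. 1 * x i) (\<lambda>i. (-1) * y i)"
    by (rule ip_cong) (use assms in \<open>auto simp: E_def\<close>)
  also have "\<dots> = (-1) * ip N x y" by (simp only: ip_scale_right mult_1_left)
  finally show ?thesis by simp
qed


lemma normalize_vec:
  assumes "ip N z z \<noteq> 0"
  defines "s \<equiv> sqrt (ip N z z)"
  shows "restrict (\<lambda>i. z i / s) {..<N} \<in> PiE {..<N} (\<lambda>_. {-1..1})"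
    and "ip N (restrict (\<lambda>i. z i / s) {..<N}) (restrict (\<lambda>i. z i / s) {..<N}) = 1"
    and "s > 0" and "s\<^sup>2 = ip N z z"
proof -
  have pos: "ip N z z > 0" using assms ip_self_nonneg[of N z] by linarith
  show s0: "s > 0" unfolding s_def using pos by simp
  show s2: "s\<^sup>2 = ip N z z" unfolding s_def using pos by simp
  have eq: "ip N (restrict (\<lambda>i. z i / s) {..<N}) (restrict (\<lambda>i. z i / s) {..<N})
        = ip N (\<lambda>i. (1/s) * z i) (\<lambda>i. (1/s) * z i)"
    by (rule ip_cong) auto
  show "ip N (restrict (\<lambda>i. z i / s) {..<N}) (restrict (\<lambda>i. z i / s) {..<N}) = 1"
    unfolding eq ip_scale_left ip_scale_right using s0 s2 pos by (simp add: power2_eq_square)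
  have "-1 \<le> z i / s \<and> z i / s \<le> 1" if i: "i < N" for i
  proof -
    have "(z i)\<^sup>2 \<le> ip N z z" unfolding ip_def
      using member_le_sum[of i "{..<N}" "\<lambda>j. z j * z j"] i by (simp add: power2_eq_square)
    hence "(z i / s)\<^sup>2 \<le> 1" using s0 s2 pos by (simp add: power_divide)
    hence "\<bar>z i / s\<bar> \<le> 1" by (simp add: abs_square_le_1)
    thus ?thesis using abs_le_iff[of "z i / s" 1] by linarith
  qed
  thus "restrict (\<lambda>i. z i / s) {..<N} \<in> PiE {..<N} (\<lambda>_. {-1..1})"
    by (auto simp: PiE_def Pi_def abs_le_iff)
qed

lemma eig_exists:
  assumes Ex: "E \<epsilon> x" and orth: "\<forall>p\<in>set L. ip N x (fst p) = 0"
    and eig: "\<forall>p\<in>set L. \<forall>i<N. app N T (fst p) i = snd p * fst p i"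
    and nz: "ip N x x \<noteq> 0"
  shows "\<exists>u \<mu>. E \<epsilon> u \<and> (\<forall>p\<in>set L. ip N u (fst p) = 0) \<and> ip N u u = 1 \<and>
           (\<forall>i<N. app N T u i = \<mu> * u i)"
proof -
  define W where "W z \<longleftrightarrow> E \<epsilon> z \<and> (\<forall>p\<in>set L. ip N z (fst p) = 0)" for z
  define g where "g z = (\<Sum>i<N. (z (\<sigma> i) - \<epsilon> * z i)\<^sup>2) + (\<Sum>p\<in>set L. (ip N z (fst p))\<^sup>2)
      + (ip N z z - 1)\<^sup>2" for z
  define f where "f z = ip N z (app N T z)" for z
  have g0: "g z = 0 \<longleftrightarrow> W z \<and> ip N z z = 1" for z
  proof -
    have "g z = 0 \<longleftrightarrow> (\<Sum>i<N. (z (\<sigma> i) - \<epsilon> * z i)\<^sup>2) = 0 \<and> (\<Sum>p\<in>set L. (ip N z (fst p))\<^sup>2) = 0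
       \<and> (ip N z z - 1)\<^sup>2 = 0"
    proof -
      have "0 \<le> (\<Sum>i<N. (z (\<sigma> i) - \<epsilon> * z i)\<^sup>2)" "0 \<le> (\<Sum>p\<in>set L. (ip N z (fst p))\<^sup>2)"
        "0 \<le> (ip N z z - 1)\<^sup>2" by (auto intro: sum_nonneg)
      thus ?thesis unfolding g_def by linarith
    qed
    also have "\<dots> \<longleftrightarrow> W z \<and> ip N z z = 1"
      by (auto simp: sum_nonneg_eq_0_iff W_def E_def)
    finally show ?thesis .
  qed
  let ?X = "product_topology (\<lambda>_. euclideanreal) {..<N}"
  have proj: "continuous_map ?X euclideanreal (\<lambda>z. z i)" if "i < N" for i
    using continuous_map_product_projection[of i "{..<N}" "\<lambda>_. euclideanreal"] that by simp
  have cip: "continuous_map ?X euclideanreal (\<lambda>z. ip N z w)" for w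
    unfolding ip_def by (intro continuous_intros proj) auto
  have cipzz: "continuous_map ?X euclideanreal (\<lambda>z. ip N z z)"
    unfolding ip_def by (intro continuous_intros proj) auto
  have cg: "continuous_map ?X euclideanreal g"
    unfolding g_def by (intro continuous_intros proj cip cipzz sig_lt) auto
  have cf: "continuous_map ?X euclideanreal f"
    unfolding f_def ip_def app_def by (intro continuous_intros proj) auto
  define s where "s = sqrt (ip N x x)"
  define u0 where "u0 = restrict (\<lambda>i. x i / s) {..<N}"
  note nv = normalize_vec[OF nz, folded s_def u0_def]
  have Wsc: "W (\<lambda>i. t * z i)" if "W z" for z t
    using that unfolding W_def E_def by (auto simp: ip_scale_left)
  have Wcong: "W z'" if "W z" "\<And>i. i < N \<Longrightarrow> z' i = z i" for z z'
  proof -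
    have "ip N z' (fst p) = ip N z (fst p)" for p :: "(nat \<Rightarrow> real) \<times> real" by (rule ip_cong) (use that in auto)
    moreover have "z' (\<sigma> i) = z (\<sigma> i)" if "i < N" for i using that \<open>\<And>i. i < N \<Longrightarrow> z' i = z i\<close> sig_lt by auto
    ultimately show ?thesis using that unfolding W_def E_def by auto
  qed
  have Wx: "W x" using Ex orth unfolding W_def by auto
  have "W u0" by (rule Wcong[OF Wsc[OF Wx, of "1/s"]]) (auto simp: u0_def)
  moreover have "ip N u0 u0 = 1" using nv(2) unfolding u0_def .
  ultimately have gu0: "g u0 = 0" using g0 by auto
  have u0B: "u0 \<in> PiE {..<N} (\<lambda>_. {-1..1})" using nv(1) unfolding u0_def .
  from max_on_zero_set[OF cg cf u0B gu0] obtain u where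
    u: "u \<in> PiE {..<N} (\<lambda>_. {-1..1})" "g u = 0"
    and umax: "\<And>y. y \<in> PiE {..<N} (\<lambda>_. {-1..1}) \<Longrightarrow> g y = 0 \<Longrightarrow> f y \<le> f u" by blast
  have Wu: "W u" and uu: "ip N u u = 1" using u g0 by auto
  define lam where "lam = f u"
  have fscale: "f (\<lambda>i. t * z i) = t\<^sup>2 * f z" for t z
    unfolding f_def app_scale ip_scale_left ip_scale_right by (simp add: power2_eq_square)
  have fcong: "f z' = f z" if "\<And>i. i < N \<Longrightarrow> z' i = z i" for z z'
    unfolding f_def using that by (intro ip_cong) (auto simp: app_cong[of N z' z])
  have bound: "f z \<le> lam * ip N z z" if Wz: "W z" for z
  proof (cases "ip N z z = 0")
    case True
    have "f z = f (\<lambda>i. 0 * z i)" by (rule fcong[symmetric]) (use ip_self_zero[OF True] in auto)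
    thus ?thesis using True fscale[of 0 z] by simp
  next
    case False
    define sz where "sz = sqrt (ip N z z)"
    define v where "v = restrict (\<lambda>i. z i / sz) {..<N}"
    note nz' = normalize_vec[OF False, folded sz_def v_def]
    have "W v" by (rule Wcong[OF Wsc[OF Wz, of "1/sz"]]) (auto simp: v_def)
    moreover have "ip N v v = 1" using nz'(2) unfolding v_def .
    ultimately have "g v = 0" using g0 by auto
    have vB: "v \<in> PiE {..<N} (\<lambda>_. {-1..1})" using nz'(1) unfolding v_def .
    from umax[OF vB \<open>g v = 0\<close>] have "f v \<le> lam" unfolding lam_def .
    moreover have "f v = (1/sz)\<^sup>2 * f z"
    proof -
      have "f v = f (\<lambda>i. (1/sz) * z i)" by (rule fcong) (simp add: v_def)
      thus ?thesis by (simp only: fscale)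
    qed
    ultimately have "f z / sz\<^sup>2 \<le> lam" by (simp add: power_divide)
    moreover have "ip N z z > 0" using False ip_self_nonneg[of N z] by linarith
    ultimately show ?thesis using nz' by (simp add: divide_le_eq mult.commute)
  qed
  define y where "y = (\<lambda>i. app N T u i - lam * u i)"
  have Wapp: "W (app N T z)" if "W z" for z
  proof -
    have "ip N (app N T z) (fst p) = 0" if p: "p \<in> set L" for p
    proof -
      have "ip N (app N T z) (fst p) = ip N z (app N T (fst p))" by (rule ip_app)
      also have "\<dots> = ip N z (\<lambda>i. snd p * fst p i)" by (rule ip_cong) (use eig p in auto)
      also have "\<dots> = 0" using \<open>W z\<close> p by (simp add: ip_scale_right W_def)
      finally show ?thesis .
    qed
    thus ?thesis using app_E \<open>W z\<close> unfolding W_def by auto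
  qed
  have Wlin: "W (\<lambda>i. a i + t * b i)" if "W a" "W b" for a b t
    using that unfolding W_def E_def by (auto simp: ip_add_left ip_scale_left algebra_simps)
  have Wy: "W y" using Wlin[OF Wapp[OF Wu] Wu, of "-lam"] by (simp add: y_def)
  have yu: "ip N y u = 0"
    unfolding y_def ip_diff_left ip_scale_left using uu by (simp add: lam_def f_def ip_app ip_comm)
  define b where "b = ip N y (app N T u)"
  have key: "2 * t * b + t\<^sup>2 * (f y - lam * ip N y y) \<le> 0" for t
  proof -
    have "W (\<lambda>i. u i + t * y i)" by (rule Wlin[OF Wu Wy])
    from bound[OF this] have "f (\<lambda>i. u i + t * y i) \<le> lam * ip N (\<lambda>i. u i + t * y i) (\<lambda>i. u i + t * y i)" .
    moreover have "f (\<lambda>i. u i + t * y i) = lam + 2 * t * b + t\<^sup>2 * f y"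
      unfolding f_def app_lin ip_add_left ip_add_right ip_scale_left ip_scale_right
      by (simp add: lam_def f_def b_def ip_app[of y u] ip_comm[of N u "app N T y"] power2_eq_square algebra_simps)
    moreover have "ip N (\<lambda>i. u i + t * y i) (\<lambda>i. u i + t * y i) = 1 + t\<^sup>2 * ip N y y"
      unfolding ip_add_left ip_add_right ip_scale_left ip_scale_right
      using uu yu by (simp add: ip_comm[of N u y] power2_eq_square)
    ultimately show ?thesis by (simp add: algebra_simps)
  qed
  have b0: "b = 0" by (rule quad_le0[OF key])
  have "b = ip N y y"
  proof -
    have "ip N y y = ip N y (app N T u) - lam * ip N y u"
      by (subst (2) y_def) (simp add: ip_diff_right ip_scale_right)
    thus ?thesis using yu b_def by simp
  qed
  hence "ip N y y = 0" using b0 by simp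
  hence "\<forall>i<N. app N T u i = lam * u i" using ip_self_zero[of N y] by (simp add: y_def)
  thus ?thesis using Wu uu unfolding W_def by blast
qed


definition good :: "real \<Rightarrow> ((nat \<Rightarrow> real) \<times> real) list \<Rightarrow> bool" where
  "good \<epsilon> L \<longleftrightarrow> (\<forall>k<length L. \<forall>l<length L. ip N (fst (L!k)) (fst (L!l)) = (if k = l then 1 else 0)) \<and>
     (\<forall>p\<in>set L. E \<epsilon> (fst p) \<and> (\<forall>i<N. app N T (fst p) i = snd p * fst p i))"

lemma exists_maximal:
  "\<exists>L. good \<epsilon> L \<and> (\<forall>x. E \<epsilon> x \<and> (\<forall>p\<in>set L. ip N x (fst p) = 0) \<longrightarrow> ip N x x = 0)"
proof (rule ccontr)
  assume H: "\<not> ?thesis"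
  have ext: "\<exists>L. good \<epsilon> L \<and> length L = k" for k
  proof (induction k)
    case 0
    show ?case by (rule exI[of _ "[]"]) (simp add: good_def)
  next
    case (Suc k)
    then obtain L where L: "good \<epsilon> L" "length L = k" by blast
    from H L(1) obtain x where x: "E \<epsilon> x" "\<forall>p\<in>set L. ip N x (fst p) = 0" "ip N x x \<noteq> 0" by blast
    have eigL: "\<forall>p\<in>set L. \<forall>i<N. app N T (fst p) i = snd p * fst p i" using L(1) by (simp add: good_def)
    from eig_exists[OF x(1,2) eigL x(3)] obtain u \<mu> where
      u: "E \<epsilon> u" "\<forall>p\<in>set L. ip N u (fst p) = 0" "ip N u u = 1" "\<forall>i<N. app N T u i = \<mu> * u i" by blast
    define L' where "L' = L @ [(u, \<mu>)]"
    have o: "\<forall>a<length L'. \<forall>b<length L'. ip N (fst (L'!a)) (fst (L'!b)) = (if a = b then 1 else 0)"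
    proof (intro allI impI)
      fix a b assume a: "a < length L'" and b: "b < length L'"
      have uk: "ip N u (fst (L!c)) = 0" "ip N (fst (L!c)) u = 0" if "c < length L" for c
        using u(2) that nth_mem[OF that] ip_comm[of N u] by auto
      show "ip N (fst (L'!a)) (fst (L'!b)) = (if a = b then 1 else 0)"
        using a b L(1) uk u(3) unfolding L'_def good_def
        by (cases "a < length L"; cases "b < length L") (auto simp: nth_append)
    qed
    have e: "\<forall>p\<in>set L'. E \<epsilon> (fst p) \<and> (\<forall>i<N. app N T (fst p) i = snd p * fst p i)"
      using L(1) u unfolding L'_def good_def by auto
    have "good \<epsilon> L'" using o e unfolding good_def by blast
    moreover have "length L' = Suc k" using L(2) by (simp add: L'_def)
    ultimately show ?case by blast
  qed
  then obtain L where L: "good \<epsilon> L" "length L = Suc N" by blast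
  have "length L \<le> N"
    by (rule bessel_count[of "length L" N "\<lambda>k. fst (L!k)"]) (use L(1) in \<open>auto simp: good_def\<close>)
  with L(2) show False by simp
qed

lemma sum_pm: "(\<Sum>k<p+q. (if k < p then 1 else -1 :: real)) = real p - real q"
  by (induction q) auto

theorem spectral_split:
  obtains Ls Lk where "good 1 Ls" "good (-1) Lk"
    "\<And>k l. k < length (Ls @ Lk) \<Longrightarrow> l < length (Ls @ Lk) \<Longrightarrow>
        ip N (fst ((Ls @ Lk)!k)) (fst ((Ls @ Lk)!l)) = (if k = l then 1 else 0)"
    "\<And>v i. i < N \<Longrightarrow> v i = (\<Sum>k<length (Ls @ Lk). ip N v (fst ((Ls @ Lk)!k)) * fst ((Ls @ Lk)!k) i)"
    "length Ls + length Lk = N"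
    "real (length Ls) - real (length Lk) = real (card {i. i < N \<and> \<sigma> i = i})"
    "\<And>i j. i < N \<Longrightarrow> j < N \<Longrightarrow>
        T i j = (\<Sum>k<length (Ls @ Lk). snd ((Ls @ Lk)!k) * fst ((Ls @ Lk)!k) i * fst ((Ls @ Lk)!k) j)"
proof -
  obtain Ls where Ls: "good 1 Ls" "\<And>x. E 1 x \<Longrightarrow> (\<forall>p\<in>set Ls. ip N x (fst p) = 0) \<Longrightarrow> ip N x x = 0"
    using exists_maximal[of 1] by blast
  obtain Lk where Lk: "good (-1) Lk" "\<And>x. E (-1) x \<Longrightarrow> (\<forall>p\<in>set Lk. ip N x (fst p) = 0) \<Longrightarrow> ip N x x = 0"
    using exists_maximal[of "-1"] by blast
  define W where "W = Ls @ Lk"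
  define m where "m = length W"
  define p where "p = length Ls"
  define w where "w k = fst (W!k)" for k
  have mp: "m = p + length Lk" by (simp add: m_def p_def W_def)
  have wE: "k < p \<Longrightarrow> E 1 (w k)" "p \<le> k \<Longrightarrow> k < m \<Longrightarrow> E (-1) (w k)" for k
    using Ls(1) Lk(1) nth_mem[of k Ls] nth_mem[of "k - p" Lk]
    by (auto simp: w_def W_def nth_append p_def m_def good_def)
  have weig: "k < m \<Longrightarrow> \<forall>i<N. app N T (w k) i = snd (W!k) * w k i" for k
    using Ls(1) Lk(1) nth_mem[of k Ls] nth_mem[of "k - length Ls" Lk]
    by (cases "k < length Ls") (auto simp: w_def W_def nth_append m_def good_def)
  have on: "ip N (w k) (w l) = (if k = l then 1 else 0)" if k: "k < m" and l: "l < m" for k l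
  proof (cases "k < p"; cases "l < p")
    assume "k < p" "l < p" thus ?thesis using Ls(1) by (simp add: good_def w_def W_def nth_append p_def)
  next
    assume "\<not> k < p" "\<not> l < p" thus ?thesis using Lk(1) k l
      by (auto simp: good_def w_def W_def nth_append p_def m_def)
  next
    assume a: "k < p" "\<not> l < p"
    thus ?thesis using E_orth[OF wE(1)[OF a(1)] wE(2)[of l]] l by auto
  next
    assume a: "\<not> k < p" "l < p"
    thus ?thesis using E_orth[OF wE(1)[OF a(2)] wE(2)[of k]] k ip_comm[of N "w k"] by auto
  qed
  have compl: "v i = (\<Sum>k<m. ip N v (w k) * w k i)" if i: "i < N" for v i
  proof -
    define r where "r j = v j - (\<Sum>k<m. ip N v (w k) * w k j)" for j
    have rw: "ip N r (w l) = 0" if l: "l < m" for l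
    proof -
      have "ip N r (w l) = ip N v (w l) - (\<Sum>k<m. ip N v (w k) * ip N (w k) (w l))"
        unfolding r_def ip_diff_left by (simp only: ip_sumc_left)
      also have "(\<Sum>k<m. ip N v (w k) * ip N (w k) (w l)) = (\<Sum>k<m. (if k = l then 1 else 0) * ip N v (w k))"
        by (rule sum.cong) (auto simp: on l)
      also have "\<dots> = ip N v (w l)" by (rule delta_sum[OF l])
      finally show ?thesis by simp
    qed
    define P where "P j = (1/2) * r j + (1/2) * r (\<sigma> j)" for j
    define M where "M j = (1/2) * r j + (-1/2) * r (\<sigma> j)" for j
    have rsig: "ip N (\<lambda>j. r (\<sigma> j)) (w l) = \<epsilon> * ip N r (w l)" if "E \<epsilon> (w l)" for l \<epsilon>
    proof -
      have "ip N (\<lambda>j. r (\<sigma> j)) (w l) = ip N r (\<lambda>j. w l (\<sigma> j))" by (rule ip_sig)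
      also have "\<dots> = ip N r (\<lambda>j. \<epsilon> * w l j)" by (rule ip_cong) (use that in \<open>auto simp: E_def\<close>)
      finally show ?thesis by (simp add: ip_scale_right)
    qed
    have PE: "E 1 P" unfolding E_def P_def using sig_inv sig_lt by auto
    have ME: "E (-1) M" unfolding E_def M_def using sig_inv sig_lt by auto
    have "ip N P P = 0"
    proof (rule Ls(2)[OF PE], intro ballI)
      fix q assume "q \<in> set Ls"
      then obtain l where l: "l < p" "q = Ls!l" by (auto simp: in_set_conv_nth p_def)
      have wl: "w l = fst q" using l by (simp add: w_def W_def nth_append p_def)
      have lm: "l < m" using l mp by simp
      have "ip N P (w l) = (1/2) * ip N r (w l) + (1/2) * ip N (\<lambda>j. r (\<sigma> j)) (w l)"
        unfolding P_def ip_add_left ip_scale_left by simp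
      also have "\<dots> = 0" using rsig[OF wE(1)[OF l(1)]] rw[OF lm] by simp
      finally show "ip N P (fst q) = 0" using wl by simp
    qed
    moreover have "ip N M M = 0"
    proof (rule Lk(2)[OF ME], intro ballI)
      fix q assume "q \<in> set Lk"
      then obtain l0 where l0: "l0 < length Lk" "q = Lk!l0" by (auto simp: in_set_conv_nth)
      define l where "l = p + l0"
      have wl: "w l = fst q" using l0 by (simp add: w_def W_def nth_append p_def l_def)
      have lm: "l < m" "p \<le> l" using l0 mp by (auto simp: l_def)
      have "ip N M (w l) = (1/2) * ip N r (w l) + (-1/2) * ip N (\<lambda>j. r (\<sigma> j)) (w l)"
        unfolding M_def ip_add_left ip_scale_left by simp
      also have "\<dots> = 0" using rsig[OF wE(2)[OF lm(2) lm(1)]] rw[OF lm(1)] by simp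
      finally show "ip N M (fst q) = 0" using wl by simp
    qed
    ultimately have "P i = 0" "M i = 0" using ip_self_zero i by auto
    hence "r i = 0" unfolding P_def M_def by simp
    thus ?thesis unfolding r_def by simp
  qed
  define e where "e a j = (if j = a then 1 else 0 :: real)" for a j :: nat
  have ipe: "ip N (e a) x = x a" if "a < N" for a x
    unfolding ip_def e_def using delta_sum[OF that, of x] by simp
  have sq1: "(\<Sum>k<m. w k i * w k i) = 1" if i: "i < N" for i
    using compl[OF i, of "e i"] ipe[OF i] by (simp add: e_def)
  have sqs: "(\<Sum>k<m. w k (\<sigma> i) * w k i) = (if \<sigma> i = i then 1 else 0)" if i: "i < N" for i
    using compl[OF i, of "e (\<sigma> i)"] ipe[OF sig_lt[OF i]] by (simp add: e_def eq_commute)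
  have cnt1: "real m = real N"
  proof -
    have "real m = (\<Sum>k<m. ip N (w k) (w k))" by (simp add: on)
    also have "\<dots> = (\<Sum>i<N. \<Sum>k<m. w k i * w k i)" unfolding ip_def by (rule sum.swap)
    also have "\<dots> = real N" by (simp add: sq1)
    finally show ?thesis .
  qed
  have cnt2: "real p - real (length Lk) = real (card {i. i < N \<and> \<sigma> i = i})"
  proof -
    have "(\<Sum>k<m. ip N (\<lambda>i. w k (\<sigma> i)) (w k)) = (\<Sum>k<m. (if k < p then 1 else -1))"
    proof (rule sum.cong[OF refl])
      fix k assume "k \<in> {..<m}"
      hence k: "k < m" by simp
      show "ip N (\<lambda>i. w k (\<sigma> i)) (w k) = (if k < p then 1 else -1)"
      proof (cases "k < p")
        case True
        have "ip N (\<lambda>i. w k (\<sigma> i)) (w k) = ip N (\<lambda>i. 1 * w k i) (w k)"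
          by (rule ip_cong) (use wE(1)[OF True] in \<open>auto simp: E_def\<close>)
        thus ?thesis using on[OF k k] True by (simp add: ip_scale_left)
      next
        case False
        have "ip N (\<lambda>i. w k (\<sigma> i)) (w k) = ip N (\<lambda>i. (-1) * w k i) (w k)"
          by (rule ip_cong) (use wE(2)[of k] False k in \<open>auto simp: E_def\<close>)
        thus ?thesis using on[OF k k] False by (simp only: ip_scale_left) simp
      qed
    qed
    also have "\<dots> = real p - real (length Lk)" unfolding mp by (rule sum_pm)
    finally have A: "(\<Sum>k<m. ip N (\<lambda>i. w k (\<sigma> i)) (w k)) = real p - real (length Lk)" .
    have "(\<Sum>k<m. ip N (\<lambda>i. w k (\<sigma> i)) (w k)) = (\<Sum>i<N. \<Sum>k<m. w k (\<sigma> i) * w k i)"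
      unfolding ip_def by (rule sum.swap)
    also have "\<dots> = (\<Sum>i<N. (if \<sigma> i = i then 1 else 0))" by (rule sum.cong) (auto simp: sqs)
    also have "\<dots> = real (card {i. i < N \<and> \<sigma> i = i})"
      by (simp add: sum.If_cases Int_def conj_commute)
    finally show ?thesis using A by simp
  qed
  have spec: "T i j = (\<Sum>k<m. snd (W!k) * w k i * w k j)" if i: "i < N" and j: "j < N" for i j
  proof -
    have "T i j = app N T (e j) i" unfolding app_def e_def
      using delta_sum[OF j, of "T i"] by (simp add: mult.commute)
    also have "\<dots> = app N T (\<lambda>l. \<Sum>k<m. w k j * w k l) i"
      by (rule arg_cong[where f="\<lambda>x. x i"], rule app_cong)
        (use compl[of _ "e j"] ipe[OF j] in \<open>simp add: ip_comm\<close>)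
    also have "\<dots> = (\<Sum>k<m. w k j * app N T (w k) i)" by (rule app_sumc)
    also have "\<dots> = (\<Sum>k<m. snd (W!k) * w k i * w k j)"
      by (rule sum.cong) (use weig i in auto)
    finally show ?thesis .
  qed
  show ?thesis
    apply (rule that[OF Ls(1) Lk(1)])
    using on compl cnt1 cnt2 spec mp
    by (simp_all add: w_def W_def m_def p_def)
qed

end



definition sig :: "nat \<Rightarrow> nat \<Rightarrow> nat" where "sig n i = (i mod n) * n + i div n"

lemma sig_facts:
  assumes i: "i < n * n"
  shows "sig n i < n * n" "sig n (sig n i) = i" "sig n i mod n = i div n" "sig n i div n = i mod n"
proof -
  have n: "n > 0" using i by (cases n) auto
  have d: "i div n < n" using i by (simp add: less_mult_imp_div_less)
  have m: "i mod n < n" using n by simp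
  show A: "sig n i mod n = i div n" unfolding sig_def using d by simp
  show B: "sig n i div n = i mod n" unfolding sig_def using d n by simp
  have "sig n (sig n i) = (sig n i mod n) * n + sig n i div n" by (rule sig_def)
  thus "sig n (sig n i) = i" unfolding A B by simp
  have "(i mod n) * n + i div n < (i mod n) * n + n" using d by simp
  also have "\<dots> = (i mod n + 1) * n" by simp
  also have "\<dots> \<le> n * n" using m by (intro mult_right_mono) auto
  finally show "sig n i < n * n" unfolding sig_def .
qed

lemma idx_facts:
  assumes a: "a < n" and b: "b < (n::nat)"
  shows "(a + b * n) mod n = a" "(a + b * n) div n = b" "a + b * n < n * n"
proof -
  show "(a + b * n) mod n = a" using a by simp
  show "(a + b * n) div n = b" using a by simp
  have "a + b * n < n + b * n" using a by simp
  also have "\<dots> = (b + 1) * n" by simp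
  also have "\<dots> \<le> n * n" using b by (intro mult_right_mono) auto
  finally show "a + b * n < n * n" .
qed

lemma idx_decomp: "i mod n + (i div n) * (n::nat) = i" by simp

lemma idx_lt: "i < n * (n::nat) \<Longrightarrow> i div n < n \<and> i mod n < n"
  by (cases "n = 0") (auto simp: less_mult_imp_div_less)

lemma mult_entry:
  assumes "A \<in> carrier_mat a b" "B \<in> carrier_mat b c" "i < a" "j < c"
  shows "(A * B) $$ (i, j) = (\<Sum>k<b. A $$ (i, k) * B $$ (k, j))"
  using assms by (simp add: index_mult_mat scalar_prod_def atLeast0LessThan)

lemma PS_perm_carrier: "PS_perm n \<in> carrier_mat (n^2) (n^2)"
  unfolding PS_perm_def by simp

lemma PS_perm_entry: "r < n^2 \<Longrightarrow> c < n^2 \<Longrightarrow> PS_perm n $$ (r, c) = (if r = sig n c then 1 else 0)"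
  unfolding PS_perm_def sig_def by simp

lemma PS_entry:
  assumes M: "M \<in> carrier_mat (n^2) (n^2)" and r: "r < n^2" and c: "c < n^2"
  shows "(PS_perm n * M * PS_perm n) $$ (r, c) = M $$ (sig n r, sig n c)"
proof -
  have nn: "n^2 = n * n" by (simp add: power2_eq_square)
  have sr: "sig n r < n^2" "sig n (sig n r) = r" using sig_facts[of r n] r nn by auto
  have sc: "sig n c < n^2" using sig_facts[of c n] c nn by auto
  have PM: "PS_perm n * M \<in> carrier_mat (n^2) (n^2)" using mult_carrier_mat[OF PS_perm_carrier M] .
  have e1: "(PS_perm n * M) $$ (r, k) = M $$ (sig n r, k)" if k: "k < n^2" for k
  proof -
    have "(PS_perm n * M) $$ (r, k) = (\<Sum>l<n^2. (if l = sig n r then 1 else 0) * M $$ (l, k))"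
      by (subst mult_entry[OF PS_perm_carrier M r k], rule sum.cong)
         (use r sig_facts[of _ n] nn in \<open>auto simp: PS_perm_entry\<close>)
    also have "\<dots> = M $$ (sig n r, k)" by (rule delta_sum[OF sr(1)])
    finally show ?thesis .
  qed
  have "(PS_perm n * M * PS_perm n) $$ (r, c) = (\<Sum>k<n^2. (if k = sig n c then 1 else 0) * M $$ (sig n r, k))"
    by (subst mult_entry[OF PM PS_perm_carrier r c], rule sum.cong)
       (use c e1 in \<open>auto simp: PS_perm_entry mult.commute\<close>)
  also have "\<dots> = M $$ (sig n r, sig n c)" by (rule delta_sum[OF sc])
  finally show ?thesis .
qed


lemma sum_split_add: "(\<Sum>k<p+(q::nat). f k) = (\<Sum>k<p. f k) + (\<Sum>k<q. f (p+k))"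
  by (induction q) (auto simp: add.assoc)

lemma tilde_entry: "r < n^2 \<Longrightarrow> c < n^2 \<Longrightarrow>
   tilde n A $$ (r, c) = A $$ (c mod n + (r mod n) * n, c div n + (r div n) * n)"
  unfolding tilde_def by simp

theorem mainTheorem10:
  fixes n :: nat and A :: "real mat"
  assumes "PS_symmetric n A"
  shows "PS_symmetric n (tilde n A) \<and>
    (\<exists>(lsym :: nat \<Rightarrow> real) (Bsym :: nat \<Rightarrow> real mat) (lskew :: nat \<Rightarrow> real) (Bskew :: nat \<Rightarrow> real mat).
       (\<forall>i < n * (n + 1) div 2. Bsym i \<in> carrier_mat n n \<and> (Bsym i)\<^sup>T = Bsym i) \<and>
       (\<forall>i < n * (n - 1) div 2. Bskew i \<in> carrier_mat n n \<and> (Bskew i)\<^sup>T = - Bskew i) \<and>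
       orthonormal_basis_family (n^2)
         (\<lambda>k. if k < n * (n + 1) div 2 then vec_of_mat (Bsym k)
              else vec_of_mat (Bskew (k - n * (n + 1) div 2))) \<and>
       A = mat (n^2) (n^2) (\<lambda>(r, c).
             (\<Sum>i < n * (n + 1) div 2. lsym i * kron (Bsym i) (Bsym i) $$ (r, c)) +
             (\<Sum>i < n * (n - 1) div 2. lskew i * kron (Bskew i) (Bskew i) $$ (r, c))))"
proof -
  have nn: "n^2 = n * n" by (simp add: power2_eq_square)
  have Ac: "A \<in> carrier_mat (n^2) (n^2)" and AT: "A = A\<^sup>T" and AP: "A = PS_perm n * A * PS_perm n"
    using assms unfolding PS_symmetric_def by auto
  have Asym: "A $$ (a, b) = A $$ (b, a)" if "a < n^2" "b < n^2" for a b
    using arg_cong[OF AT, of "\<lambda>M. M $$ (a, b)"] Ac that by simp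
  have Asig: "A $$ (a, b) = A $$ (sig n a, sig n b)" if "a < n^2" "b < n^2" for a b
    using arg_cong[OF AP, of "\<lambda>M. M $$ (a, b)"] PS_entry[OF Ac that] by simp
  define Tt where "Tt = tilde n A"
  have Ttc: "Tt \<in> carrier_mat (n^2) (n^2)" unfolding Tt_def tilde_def by simp
  have ix: "c mod n + (r mod n) * n < n^2" "c div n + (r div n) * n < n^2"
    if "r < n^2" "c < n^2" for r c
    using idx_facts[of "c mod n" n "r mod n"] idx_facts[of "c div n" n "r div n"] idx_lt[of r n] idx_lt[of c n]
      that nn by auto
  have Ttsym: "Tt $$ (r, c) = Tt $$ (c, r)" if r: "r < n^2" and c: "c < n^2" for r c
  proof -
    have lr: "r mod n < n" "r div n < n" "c mod n < n" "c div n < n" using idx_lt[of r n] idx_lt[of c n] r c nn by auto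
    have "Tt $$ (r, c) = A $$ (sig n (c mod n + (r mod n) * n), sig n (c div n + (r div n) * n))"
      unfolding Tt_def tilde_entry[OF r c] by (rule Asig[OF ix[OF r c]])
    also have "\<dots> = Tt $$ (c, r)"
      unfolding Tt_def tilde_entry[OF c r] sig_def using lr by (simp add: add.commute)
    finally show ?thesis .
  qed
  have Ttsig: "Tt $$ (sig n r, sig n c) = Tt $$ (r, c)" if r: "r < n^2" and c: "c < n^2" for r c
  proof -
    have sr: "sig n r < n^2" "sig n r mod n = r div n" "sig n r div n = r mod n" using sig_facts[of r n] r nn by auto
    have sc: "sig n c < n^2" "sig n c mod n = c div n" "sig n c div n = c mod n" using sig_facts[of c n] c nn by auto
    have "Tt $$ (sig n r, sig n c) = A $$ (c div n + (r div n) * n, c mod n + (r mod n) * n)"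
      unfolding Tt_def tilde_entry[OF sr(1) sc(1)] sr sc ..
    also have "\<dots> = Tt $$ (r, c)" unfolding Tt_def tilde_entry[OF r c]
      by (rule Asym) (use ix[OF r c] in auto)
    finally show ?thesis .
  qed
  have PST: "PS_symmetric n Tt"
    unfolding PS_symmetric_def
  proof (intro conjI Ttc)
    show "Tt = Tt\<^sup>T" by (rule eq_matI) (use Ttc Ttsym in auto)
    show "Tt = PS_perm n * Tt * PS_perm n"
      by (rule eq_matI) (use Ttc Ttsig PS_entry[OF Ttc] in \<open>auto simp: PS_perm_def\<close>)
  qed
  interpret psym "n * n" "\<lambda>i j. Tt $$ (i, j)" "sig n"
    by unfold_locales (use Ttsym Ttsig sig_facts nn in auto)

  obtain Ls Lk where Ls: "good 1 Ls" and Lk: "good (-1) Lk"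
    and on: "\<And>k l. k < length (Ls @ Lk) \<Longrightarrow> l < length (Ls @ Lk) \<Longrightarrow>
        ip (n*n) (fst ((Ls @ Lk)!k)) (fst ((Ls @ Lk)!l)) = (if k = l then 1 else 0)"
    and compl: "\<And>v i. i < n*n \<Longrightarrow> v i = (\<Sum>k<length (Ls @ Lk). ip (n*n) v (fst ((Ls @ Lk)!k)) * fst ((Ls @ Lk)!k) i)"
    and len: "length Ls + length Lk = n*n"
    and diff: "real (length Ls) - real (length Lk) = real (card {i. i < n*n \<and> sig n i = i})"
    and spec: "\<And>i j. i < n*n \<Longrightarrow> j < n*n \<Longrightarrow>
        Tt $$ (i, j) = (\<Sum>k<length (Ls @ Lk). snd ((Ls @ Lk)!k) * fst ((Ls @ Lk)!k) i * fst ((Ls @ Lk)!k) j)"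
    by (rule spectral_split) blast
  define W where "W = Ls @ Lk"
  define p where "p = length Ls"
  define q where "q = length Lk"
  define w where "w k = fst (W!k)" for k
  have lenW: "length W = n * n" using len by (simp add: W_def)
  have fixset: "{i. i < n*n \<and> sig n i = i} = (\<lambda>a. a + a * n) ` {..<n}"
  proof (intro equalityI subsetI)
    fix i assume "i \<in> {i. i < n*n \<and> sig n i = i}"
    hence i: "i < n*n" "sig n i = i" by auto
    have "i mod n = i div n" using sig_facts(3)[OF i(1)] i(2) by simp
    hence "i = i mod n + (i mod n) * n" using idx_decomp[of i n] by simp
    moreover have "i mod n < n" using idx_lt[OF i(1)] by simp
    ultimately show "i \<in> (\<lambda>a. a + a * n) ` {..<n}" by blast
  next
    fix i assume "i \<in> (\<lambda>a. a + a * n) ` {..<n}"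
    then obtain a where a: "a < n" "i = a + a * n" by blast
    show "i \<in> {i. i < n*n \<and> sig n i = i}"
      using idx_facts[OF a(1) a(1)] a(2) by (simp add: sig_def)
  qed
  have mono: "x + x * n < y + y * n" if "x < y" for x y :: nat
    using that by (simp add: add_less_le_mono mult_le_mono1)
  have "inj_on (\<lambda>a. a + a * n) {..<n}"
  proof (rule inj_onI)
    fix x y assume "x + x * n = y + y * n"
    thus "x = y" using mono[of x y] mono[of y x] by (cases x y rule: linorder_cases) auto
  qed
  hence cardfix: "card {i. i < n*n \<and> sig n i = i} = n" unfolding fixset by (simp add: card_image)
  have pq: "p = q + n" using diff cardfix unfolding p_def q_def by simp
  have pq2: "p + q = n * n" using len unfolding p_def q_def .
  have hp: "n * (n + 1) div 2 = p"
  proof -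
    have "n * (n + 1) = 2 * p" using pq pq2 by (simp add: algebra_simps)
    thus ?thesis by simp
  qed
  have hq: "n * (n - 1) div 2 = q"
  proof -
    have "n * (n - 1) = n * n - n" by (simp add: diff_mult_distrib2)
    also have "\<dots> = 2 * q" using pq pq2 by simp
    finally show ?thesis by simp
  qed
  have wE1: "E 1 (w k)" if "k < p" for k
    using Ls nth_mem[OF that[unfolded p_def]] that
    by (auto simp: good_def w_def W_def nth_append p_def)
  have wE2: "E (-1) (w (p + k))" if "k < q" for k
    using Lk nth_mem[OF that[unfolded q_def]] that
    by (auto simp: good_def w_def W_def nth_append p_def)
  define Bsym where "Bsym k = mat n n (\<lambda>(a, b). w k (a + b * n))" for k
  define Bskew where "Bskew k = mat n n (\<lambda>(a, b). w (p + k) (a + b * n))" for k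
  define lsym where "lsym k = snd (W!k)" for k
  define lskew where "lskew k = snd (W!(p + k))" for k
  have sigab: "sig n (a + b * n) = b + a * n" if "a < n" "b < n" for a b
    using idx_facts[OF that] by (simp add: sig_def)
  have symB: "Bsym k \<in> carrier_mat n n \<and> (Bsym k)\<^sup>T = Bsym k" if k: "k < p" for k
  proof -
    have sw: "w k (b + a * n) = w k (a + b * n)" if "a < n" "b < n" for a b
    proof -
      have "w k (sig n (a + b * n)) = 1 * w k (a + b * n)"
        using wE1[OF k] idx_facts(3)[OF that] unfolding E_def by blast
      thus ?thesis using sigab[OF that] by simp
    qed
    have "(Bsym k)\<^sup>T = Bsym k"
    proof (rule eq_matI)
      fix i j assume "i < dim_row (Bsym k)" "j < dim_col (Bsym k)"
      hence ij: "i < n" "j < n" by (auto simp: Bsym_def)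
      show "(Bsym k)\<^sup>T $$ (i, j) = Bsym k $$ (i, j)" using sw[OF ij(2) ij(1)] ij by (simp add: Bsym_def)
    qed (simp_all add: Bsym_def)
    thus ?thesis unfolding Bsym_def by simp
  qed
  have skewB: "Bskew k \<in> carrier_mat n n \<and> (Bskew k)\<^sup>T = - Bskew k" if k: "k < q" for k
  proof -
    have sw: "w (p + k) (b + a * n) = - w (p + k) (a + b * n)" if "a < n" "b < n" for a b
    proof -
      have "w (p + k) (sig n (a + b * n)) = (-1) * w (p + k) (a + b * n)"
        using wE2[OF k] idx_facts(3)[OF that] unfolding E_def by blast
      thus ?thesis using sigab[OF that] by simp
    qed
    have "(Bskew k)\<^sup>T = - Bskew k"
    proof (rule eq_matI)
      fix i j assume "i < dim_row (- Bskew k)" "j < dim_col (- Bskew k)"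
      hence ij: "i < n" "j < n" by (auto simp: Bskew_def)
      show "(Bskew k)\<^sup>T $$ (i, j) = (- Bskew k) $$ (i, j)" using sw[OF ij(1) ij(2)] ij by (simp add: Bskew_def)
    qed (simp_all add: Bskew_def)
    thus ?thesis unfolding Bskew_def by simp
  qed
  define V where "V k = (if k < p then vec_of_mat (Bsym k) else vec_of_mat (Bskew (k - p)))" for k
  have Vw: "V k = vec (n * n) (w k)" for k
  proof -
    have e: "vec_of_mat (mat n n (\<lambda>(a, b). f (a + b * n))) = vec (n * n) f" for f
    proof (rule eq_vecI)
      fix i assume "i < dim_vec (vec (n * n) f)"
      hence i: "i < n * n" by simp
      show "vec_of_mat (mat n n (\<lambda>(a, b). f (a + b * n))) $ i = vec (n * n) f $ i"
        unfolding vec_of_mat_def using i idx_lt[OF i] by simp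
    qed (simp add: vec_of_mat_def)
    show ?thesis unfolding V_def Bsym_def Bskew_def e by simp
  qed
  have ONB: "orthonormal_basis_family (n^2) V"
    unfolding orthonormal_basis_family_def nn Vw
  proof (intro conjI allI impI ballI)
    fix k l assume k: "k < n * n" and l: "l < n * n"
    show "vec (n * n) (w k) \<bullet> vec (n * n) (w l) = (if k = l then 1 else 0)"
      using on[of k l] k l lenW unfolding W_def[symmetric] w_def[symmetric]
      by (simp add: scalar_prod_def ip_def atLeast0LessThan)
  next
    fix k show "vec (n * n) (w k) \<in> carrier_vec (n * n)" by simp
  next
    fix v :: "real vec" assume v: "v \<in> carrier_vec (n * n)"
    show "\<exists>c. \<forall>r<n * n. v $ r = (\<Sum>k<n * n. c k * vec (n * n) (w k) $ r)"
    proof (intro exI allI impI)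
      fix r assume r: "r < n * n"
      have "v $ r = (\<Sum>k<n*n. ip (n*n) (\<lambda>i. v $ i) (w k) * w k r)"
        using compl[OF r, of "\<lambda>i. v $ i"] lenW unfolding W_def[symmetric] w_def[symmetric] by simp
      thus "v $ r = (\<Sum>k<n * n. ip (n*n) (\<lambda>i. v $ i) (w k) * vec (n * n) (w k) $ r)"
        using r by simp
    qed
  qed
  have Adec: "A = mat (n^2) (n^2) (\<lambda>(r, c).
             (\<Sum>i < p. lsym i * kron (Bsym i) (Bsym i) $$ (r, c)) +
             (\<Sum>i < q. lskew i * kron (Bskew i) (Bskew i) $$ (r, c)))"
  proof (rule eq_matI)
    show "dim_row A = dim_row (mat (n^2) (n^2) (\<lambda>(r, c).
             (\<Sum>i < p. lsym i * kron (Bsym i) (Bsym i) $$ (r, c)) +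
             (\<Sum>i < q. lskew i * kron (Bskew i) (Bskew i) $$ (r, c))))" using Ac by simp
    show "dim_col A = dim_col (mat (n^2) (n^2) (\<lambda>(r, c).
             (\<Sum>i < p. lsym i * kron (Bsym i) (Bsym i) $$ (r, c)) +
             (\<Sum>i < q. lskew i * kron (Bskew i) (Bskew i) $$ (r, c))))" using Ac by simp
    fix r c assume r0: "r < dim_row (mat (n^2) (n^2) (\<lambda>(r, c).
             (\<Sum>i < p. lsym i * kron (Bsym i) (Bsym i) $$ (r, c)) +
             (\<Sum>i < q. lskew i * kron (Bskew i) (Bskew i) $$ (r, c))))"
      and c0: "c < dim_col (mat (n^2) (n^2) (\<lambda>(r, c).
             (\<Sum>i < p. lsym i * kron (Bsym i) (Bsym i) $$ (r, c)) +
             (\<Sum>i < q. lskew i * kron (Bskew i) (Bskew i) $$ (r, c))))"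
    have r: "r < n * n" and c: "c < n * n" using r0 c0 nn by auto
    have lr: "r mod n < n" "r div n < n" "c mod n < n" "c div n < n" using idx_lt[OF r] idx_lt[OF c] by auto
    define r' where "r' = r div n + (c div n) * n"
    define c' where "c' = r mod n + (c mod n) * n"
    have r'l: "r' < n * n" unfolding r'_def by (rule idx_facts(3)) (use lr in auto)
    have c'l: "c' < n * n" unfolding c'_def by (rule idx_facts(3)) (use lr in auto)
    have kr: "kron (mat n n f) (mat n n f) $$ (r, c) = f (r div n, c div n) * f (r mod n, c mod n)" for f
      unfolding kron_def using r c lr by simp
    have "(\<Sum>i < p. lsym i * kron (Bsym i) (Bsym i) $$ (r, c)) +
          (\<Sum>i < q. lskew i * kron (Bskew i) (Bskew i) $$ (r, c))
        = (\<Sum>k < p. snd (W!k) * w k r' * w k c') + (\<Sum>k < q. snd (W!(p+k)) * w (p+k) r' * w (p+k) c')"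
      unfolding Bsym_def Bskew_def kr lsym_def lskew_def r'_def c'_def by (simp add: mult.assoc)
    also have "\<dots> = (\<Sum>k < p + q. snd (W!k) * w k r' * w k c')" by (rule sum_split_add[symmetric])
    also have "\<dots> = Tt $$ (r', c')" using spec[OF r'l c'l] lenW pq2
      unfolding W_def[symmetric] w_def[symmetric] by simp
    also have "\<dots> = A $$ (r, c)"
    proof -
      have "c' mod n + (r' mod n) * n = r" "c' div n + (r' div n) * n = c"
        unfolding r'_def c'_def using idx_facts lr idx_decomp by (auto simp: add.commute)
      thus ?thesis unfolding Tt_def using tilde_entry[of r' n c' A] r'l c'l nn by simp
    qed
    finally show "A $$ (r, c) = mat (n^2) (n^2) (\<lambda>(r, c).
             (\<Sum>i < p. lsym i * kron (Bsym i) (Bsym i) $$ (r, c)) +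
             (\<Sum>i < q. lskew i * kron (Bskew i) (Bskew i) $$ (r, c))) $$ (r, c)"
      using r c nn by simp
  qed
  show ?thesis
    unfolding hp hq Tt_def[symmetric]
    apply (rule conjI[OF PST])
    apply (rule exI[of _ lsym], rule exI[of _ Bsym], rule exI[of _ lskew], rule exI[of _ Bskew])
    apply (intro conjI allI impI)
    using symB skewB ONB Adec unfolding V_def by auto
qed


end
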